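(* Let $(X,\leq)$ be a poset and $K$ a field, write $FI=FI(X,K)$ and $J=J(FI(X,K))$ (the Jacobson radical). For $k>0$ let $Z_k=\{\alpha\in FI\mid \alpha_{xy}=0 \text{ whenever } l(x,y)\leq k-1\}$. Then: (1) $FI^{(1)}\subseteq Z_1=J$; (2) $Z_mZ_n\subseteq Z_{m+n}$ for all $m,n>0$; (3) $\gamma_n(J)\subseteq Z_n$ for all $n>0$; (4) $FI^{(n)}\subseteq Z_{2^{n-1}}$ for all $n>0$; (5) $J^{(n)}\subseteq Z_{2^n}$ for all $n\geq0$.
   Context: $FI(X,K)$ is the finitary incidence algebra: the $K$-vector space of formal sums $\alpha=\sum_{x\leq y}\alpha_{xy}e_{xy}$ ($x,y\in X$, $\alpha_{xy}\in K$) such that for every pair $x<y$ only finitely many $x\leq u<v\leq y$ have $\alpha_{uv}\neq0$, with convolution product $\alpha\beta=\sum_{x\leq y}\big(\sum_{x\leq z\leq y}\alpha_{xz}\beta_{zy}\big)e_{xy}$. For $x\leq y$, $l(x,y)$ is the length of the interval $\{z\mid x\leq z\leq y\}$, i.e. the supremum of $|C|-1$ over finite chains $C$ in it. With $[a,b]=ab-ba$ and $UV$, $[U,V]$ the spans of products, commutators: $FI^{(0)}=FI$, $FI^{(n+1)}=[FI^{(n)},FI^{(n)}]FI$; $J^{(0)}=J$, $J^{(n+1)}=[J^{(n)},J^{(n)}]J$; $\gamma_1(J)=J$, $\gamma_{n+1}(J)=[\gamma_n(J),J]$. *)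

theory Defs
  imports Main "HOL-Library.Extended_Nat"
begin

text \<open>Elements of FI(X,K) are represented as functions alpha :: X => X => K,
  with alpha x y the coefficient of e_xy; coefficients at pairs with not (x <= y) are 0.
  The poset X is a type of class order, K a type of class field.\<close>

definition FI :: "('a::order \<Rightarrow> 'a \<Rightarrow> 'k::field) set" where
  "FI = {\<alpha>. (\<forall>x y. \<not> x \<le> y \<longrightarrow> \<alpha> x y = 0) \<and>
             (\<forall>x y. x < y \<longrightarrow> finite {(u, v). x \<le> u \<and> u < v \<and> v \<le> y \<and> \<alpha> u v \<noteq> 0})}"

text \<open>Convolution product; the sum ranges over the (finitely many, for elements of FI)
  z in [x,y] contributing a nonzero term.\<close>
definition conv :: "('a::order \<Rightarrow> 'a \<Rightarrow> 'k::field) \<Rightarrow> ('a \<Rightarrow> 'a \<Rightarrow> 'k) \<Rightarrow> ('a \<Rightarrow> 'a \<Rightarrow> 'k)" where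
  "conv \<alpha> \<beta> = (\<lambda>x y. if x \<le> y then
      (\<Sum>z \<in> {z. x \<le> z \<and> z \<le> y \<and> \<alpha> x z * \<beta> z y \<noteq> 0}. \<alpha> x z * \<beta> z y) else 0)"

definition comm :: "('a::order \<Rightarrow> 'a \<Rightarrow> 'k::field) \<Rightarrow> ('a \<Rightarrow> 'a \<Rightarrow> 'k) \<Rightarrow> ('a \<Rightarrow> 'a \<Rightarrow> 'k)" where
  "comm \<alpha> \<beta> = (\<lambda>x y. conv \<alpha> \<beta> x y - conv \<beta> \<alpha> x y)"

definition kspan :: "('a \<Rightarrow> 'a \<Rightarrow> 'k::field) set \<Rightarrow> ('a \<Rightarrow> 'a \<Rightarrow> 'k) set" where
  "kspan S = {f. \<exists>n (c :: nat \<Rightarrow> 'k) v. (\<forall>i<n. v i \<in> S) \<and>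
                   f = (\<lambda>x y. \<Sum>i<n. c i * v i x y)}"

definition prodsp :: "('a::order \<Rightarrow> 'a \<Rightarrow> 'k::field) set \<Rightarrow> ('a \<Rightarrow> 'a \<Rightarrow> 'k) set \<Rightarrow> ('a \<Rightarrow> 'a \<Rightarrow> 'k) set" where
  "prodsp U V = kspan {conv u v | u v. u \<in> U \<and> v \<in> V}"

definition comsp :: "('a::order \<Rightarrow> 'a \<Rightarrow> 'k::field) set \<Rightarrow> ('a \<Rightarrow> 'a \<Rightarrow> 'k) set \<Rightarrow> ('a \<Rightarrow> 'a \<Rightarrow> 'k) set" where
  "comsp U V = kspan {comm u v | u v. u \<in> U \<and> v \<in> V}"

definition left_ideal :: "('a::order \<Rightarrow> 'a \<Rightarrow> 'k::field) set \<Rightarrow> bool" where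
  "left_ideal L \<longleftrightarrow> L \<subseteq> FI \<and> (\<lambda>x y. 0) \<in> L \<and> (\<forall>a\<in>L. \<forall>b\<in>L. (\<lambda>x y. a x y + b x y) \<in> L) \<and> (\<forall>a\<in>L. (\<lambda>x y. - a x y) \<in> L)
     \<and> (\<forall>r\<in>FI. \<forall>a\<in>L. conv r a \<in> L)"

definition maximal_left_ideal :: "('a::order \<Rightarrow> 'a \<Rightarrow> 'k::field) set \<Rightarrow> bool" where
  "maximal_left_ideal L \<longleftrightarrow> left_ideal L \<and> L \<noteq> FI \<and>
     (\<forall>L'. left_ideal L' \<and> L \<subseteq> L' \<longrightarrow> L' = L \<or> L' = FI)"

definition Jac :: "('a::order \<Rightarrow> 'a \<Rightarrow> 'k::field) set" where
  "Jac = FI \<inter> \<Inter> {L. maximal_left_ideal L}"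

definition len :: "'a::order \<Rightarrow> 'a \<Rightarrow> enat" where
  "len x y = Sup {enat (card C - 1) | C. finite C \<and> C \<noteq> {} \<and> C \<subseteq> {z. x \<le> z \<and> z \<le> y}
                                        \<and> Complete_Partial_Order.chain (\<le>) C}"

definition Zk :: "nat \<Rightarrow> ('a::order \<Rightarrow> 'a \<Rightarrow> 'k::field) set" where
  "Zk k = {\<alpha> \<in> FI. \<forall>x y. x \<le> y \<and> len x y \<le> enat (k - 1) \<longrightarrow> \<alpha> x y = 0}"

primrec FIder :: "nat \<Rightarrow> ('a::order \<Rightarrow> 'a \<Rightarrow> 'k::field) set" where
  "FIder 0 = FI"
| "FIder (Suc n) = prodsp (comsp (FIder n) (FIder n)) FI"

primrec Jder :: "nat \<Rightarrow> ('a::order \<Rightarrow> 'a \<Rightarrow> 'k::field) set" where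
  "Jder 0 = Jac"
| "Jder (Suc n) = prodsp (comsp (Jder n) (Jder n)) Jac"

text \<open>Lower central series, shifted: lcs n = gamma_(n+1)(J).\<close>
primrec lcs :: "nat \<Rightarrow> ('a::order \<Rightarrow> 'a \<Rightarrow> 'k::field) set" where
  "lcs 0 = Jac"
| "lcs (Suc n) = comsp (lcs n) Jac"

end

theory Submission
  imports Defs
begin

definition triang :: "('a::order \<Rightarrow> 'a \<Rightarrow> 'k::field) \<Rightarrow> bool" where
  "triang a \<longleftrightarrow> (\<forall>x y. \<not> x \<le> y \<longrightarrow> a x y = 0)"

definition idm :: "'a::order \<Rightarrow> 'a \<Rightarrow> 'k::field" where
  "idm x y = (if x = y then 1 else 0)"

definition Sp :: "('a::order \<Rightarrow> 'a \<Rightarrow> 'k::field) \<Rightarrow> 'a \<Rightarrow> 'a \<Rightarrow> ('a \<times> 'a) set" where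
  "Sp a x y = {(u, v). x \<le> u \<and> u < v \<and> v \<le> y \<and> a u v \<noteq> 0}"

lemma FI_triang: "a \<in> FI \<Longrightarrow> triang a" by (simp add: FI_def triang_def)

lemma FI_Sp: "a \<in> FI \<Longrightarrow> finite (Sp a x y)"
proof (cases "x < y")
  case True
  assume "a \<in> FI" then show ?thesis using True by (simp add: FI_def Sp_def)
next
  case False
  then have "Sp a x y = {}" unfolding Sp_def using order_le_less_trans order_less_le_trans by fastforce
  then show ?thesis by simp
qed

lemma FI_I: "triang a \<Longrightarrow> (\<And>x y. x < y \<Longrightarrow> finite (Sp a x y)) \<Longrightarrow> a \<in> FI"
  by (simp add: FI_def triang_def Sp_def)

lemma triangD: "triang a \<Longrightarrow> a x y \<noteq> 0 \<Longrightarrow> x \<le> y"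
  unfolding triang_def by blast

lemma conv_triang: "triang (conv a b)" by (simp add: triang_def conv_def)

lemma conv_sum:
  assumes "triang a" "triang b" "finite F" "{z. a x z * b z y \<noteq> 0} \<subseteq> F"
  shows "conv a b x y = (\<Sum>z\<in>F. a x z * b z y)"
proof (cases "x \<le> y")
  case True
  have "conv a b x y = (\<Sum>z \<in> {z. x \<le> z \<and> z \<le> y \<and> a x z * b z y \<noteq> 0}. a x z * b z y)"
    using True by (simp add: conv_def)
  also have "\<dots> = (\<Sum>z\<in>F. a x z * b z y)"
    apply (rule sum.mono_neutral_left)
    using assms triangD[OF assms(1)] triangD[OF assms(2)] by auto
  finally show ?thesis .
next
  case False
  have "\<forall>z\<in>F. a x z * b z y = 0"
  proof
    fix z assume "z \<in> F"
    show "a x z * b z y = 0"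
    proof (rule ccontr)
      assume h: "a x z * b z y \<noteq> 0"
      then have "x \<le> z" "z \<le> y" using triangD[OF assms(1)] triangD[OF assms(2)] by auto
      then show False using False by (meson order_trans)
    qed
  qed
  then have "(\<Sum>z\<in>F. a x z * b z y) = 0" by (rule sum.neutral)
  then show ?thesis using False by (simp add: conv_def)
qed

definition Rw :: "('a::order \<Rightarrow> 'a \<Rightarrow> 'k::field) \<Rightarrow> 'a \<Rightarrow> 'a \<Rightarrow> 'a set" where
  "Rw a x y = {z. x \<le> z \<and> z \<le> y \<and> a x z \<noteq> 0}"
definition Cl :: "('a::order \<Rightarrow> 'a \<Rightarrow> 'k::field) \<Rightarrow> 'a \<Rightarrow> 'a \<Rightarrow> 'a set" where
  "Cl a x y = {z. x \<le> z \<and> z \<le> y \<and> a z y \<noteq> 0}"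

lemma Rw_fin: assumes "a \<in> FI" shows "finite (Rw a x y)"
proof -
  have "Rw a x y \<subseteq> {x} \<union> snd ` Sp a x y"
  proof
    fix z assume z: "z \<in> Rw a x y"
    show "z \<in> {x} \<union> snd ` Sp a x y"
    proof (cases "z = x")
      case False
      then have "(x, z) \<in> Sp a x y" using z by (auto simp: Rw_def Sp_def)
      then show ?thesis by force
    qed simp
  qed
  moreover have "finite ({x} \<union> snd ` Sp a x y)" using FI_Sp[OF assms] by simp
  ultimately show ?thesis by (rule finite_subset)
qed

lemma Cl_fin: assumes "a \<in> FI" shows "finite (Cl a x y)"
proof -
  have "Cl a x y \<subseteq> {y} \<union> fst ` Sp a x y"
  proof
    fix z assume z: "z \<in> Cl a x y"
    show "z \<in> {y} \<union> fst ` Sp a x y"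
    proof (cases "z = y")
      case False
      then have "(z, y) \<in> Sp a x y" using z by (auto simp: Cl_def Sp_def)
      then show ?thesis by force
    qed simp
  qed
  moreover have "finite ({y} \<union> fst ` Sp a x y)" using FI_Sp[OF assms] by simp
  ultimately show ?thesis by (rule finite_subset)
qed

lemma conv_left: assumes a: "a \<in> FI" and b: "triang b"
  shows "conv a b x y = (\<Sum>z\<in>Rw a x y. a x z * b z y)"
  apply (rule conv_sum[OF FI_triang[OF a] b Rw_fin[OF a]])
  using triangD[OF FI_triang[OF a], of x] triangD[OF b, of _ y] by (auto simp: Rw_def)

lemma conv_right: assumes a: "triang a" and b: "b \<in> FI"
  shows "conv a b x y = (\<Sum>z\<in>Cl b x y. a x z * b z y)"
  apply (rule conv_sum[OF a FI_triang[OF b] Cl_fin[OF b]])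
  using triangD[OF a, of x] triangD[OF FI_triang[OF b], of _ y] by (auto simp: Cl_def)

lemma conv_diag: "triang a \<Longrightarrow> triang b \<Longrightarrow> conv a b x x = a x x * b x x"
proof -
  assume a: "triang a" and b: "triang b"
  have "conv a b x x = (\<Sum>z\<in>{x}. a x z * b z x)"
    apply (rule conv_sum[OF a b]) using triangD[OF a] triangD[OF b] antisym by fastforce+
  then show ?thesis by simp
qed

lemma idm_triang: "triang idm" by (simp add: triang_def idm_def)

lemma idm_FI: "idm \<in> FI"
  by (rule FI_I[OF idm_triang]) (simp add: Sp_def idm_def)

lemma conv_idm_right: "triang a \<Longrightarrow> conv a idm = a"
proof (rule ext, rule ext)
  fix x y assume a: "triang a"
  have "conv a idm x y = (\<Sum>z\<in>{y}. a x z * idm z y)"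
    apply (rule conv_sum[OF a idm_triang]) by (auto simp: idm_def split: if_splits)
  then show "conv a idm x y = a x y" by (simp add: idm_def)
qed

lemma conv_idm_left: "triang a \<Longrightarrow> conv idm a = a"
proof (rule ext, rule ext)
  fix x y assume a: "triang a"
  have "conv idm a x y = (\<Sum>z\<in>{x}. idm x z * a z y)"
    apply (rule conv_sum[OF idm_triang a]) by (auto simp: idm_def split: if_splits)
  then show "conv idm a x y = a x y" by (simp add: idm_def)
qed

lemma conv_scal: "triang a \<Longrightarrow> conv (\<lambda>x y. c * idm x y) a = (\<lambda>x y. c * a x y)"
proof (rule ext, rule ext)
  fix x y assume a: "triang a"
  have t: "triang (\<lambda>x y. c * idm x y)" by (simp add: triang_def idm_def)
  have "conv (\<lambda>x y. c * idm x y) a x y = (\<Sum>z\<in>{x}. c * idm x z * a z y)"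
    apply (rule conv_sum[OF t a]) by (auto simp: idm_def split: if_splits)
  then show "conv (\<lambda>x y. c * idm x y) a x y = c * a x y" by (simp add: idm_def)
qed

lemma conv_zero_left: "conv (\<lambda>x y. 0) b = (\<lambda>x y. 0)"
  unfolding conv_def by (intro ext) simp

lemma FI_zero: "(\<lambda>x y. 0) \<in> FI" by (rule FI_I) (auto simp: triang_def Sp_def)

lemma FI_add: "a \<in> FI \<Longrightarrow> b \<in> FI \<Longrightarrow> (\<lambda>x y. a x y + b x y) \<in> FI"
proof (rule FI_I)
  assume a: "a \<in> FI" and b: "b \<in> FI"
  show "triang (\<lambda>x y. a x y + b x y)" using FI_triang[OF a] FI_triang[OF b] by (simp add: triang_def)
  fix x y :: 'a
  have "Sp (\<lambda>x y. a x y + b x y) x y \<subseteq> Sp a x y \<union> Sp b x y" by (auto simp: Sp_def)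
  then show "finite (Sp (\<lambda>x y. a x y + b x y) x y)" using FI_Sp[OF a] FI_Sp[OF b] by (meson finite_UnI finite_subset)
qed

lemma FI_smul: "a \<in> FI \<Longrightarrow> (\<lambda>x y. c * a x y) \<in> FI"
proof (rule FI_I)
  assume a: "a \<in> FI"
  show "triang (\<lambda>x y. c * a x y)" using FI_triang[OF a] by (simp add: triang_def)
  fix x y :: 'a
  have "Sp (\<lambda>x y. c * a x y) x y \<subseteq> Sp a x y" by (auto simp: Sp_def)
  then show "finite (Sp (\<lambda>x y. c * a x y) x y)" using FI_Sp[OF a] by (meson finite_subset)
qed

lemma FI_neg: "a \<in> FI \<Longrightarrow> (\<lambda>x y. - a x y) \<in> FI"
  using FI_smul[of a "-1"] by simp

lemma FI_diff: "a \<in> FI \<Longrightarrow> b \<in> FI \<Longrightarrow> (\<lambda>x y. a x y - b x y) \<in> FI"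
  using FI_add[OF _ FI_neg[of b], of a] by simp

lemma FI_conv: assumes a: "a \<in> FI" and b: "b \<in> FI" shows "conv a b \<in> FI"
proof (rule FI_I[OF conv_triang])
  fix x y :: 'a
  have "Sp (conv a b) x y \<subseteq> Sp a x y \<union> Sp b x y \<union> (fst ` Sp a x y) \<times> (snd ` Sp b x y)"
  proof
    fix p assume p: "p \<in> Sp (conv a b) x y"
    obtain u v where uv: "p = (u, v)" by force
    have h: "x \<le> u" "u < v" "v \<le> y" "conv a b u v \<noteq> 0" using p uv by (auto simp: Sp_def)
    then have "(\<Sum>z\<in>Rw a u v. a u z * b z v) \<noteq> 0" using conv_left[OF a FI_triang[OF b]] by simp
    then obtain z where z: "z \<in> Rw a u v" "a u z * b z v \<noteq> 0"
      by (meson sum.not_neutral_contains_not_neutral)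
    have zz: "u \<le> z" "z \<le> v" "a u z \<noteq> 0" "b z v \<noteq> 0" using z by (auto simp: Rw_def)
    show "p \<in> Sp a x y \<union> Sp b x y \<union> (fst ` Sp a x y) \<times> (snd ` Sp b x y)"
    proof (cases "z = u")
      case True then show ?thesis using h zz uv by (auto simp: Sp_def)
    next
      case F1: False
      show ?thesis
      proof (cases "z = v")
        case True then show ?thesis using h zz uv by (auto simp: Sp_def)
      next
        case False
        have "(u, z) \<in> Sp a x y" using h zz F1 by (auto simp: Sp_def order_le_less intro: order_trans)
        moreover have "(z, v) \<in> Sp b x y" using h zz F1 False
          by (auto simp: Sp_def order_le_less intro: order_trans)
        ultimately have "(fst (u, z), snd (z, v)) \<in> (fst ` Sp a x y) \<times> (snd ` Sp b x y)"
          by (intro SigmaI imageI)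
        then show ?thesis using uv by simp
      qed
    qed
  qed
  moreover have "finite (Sp a x y \<union> Sp b x y \<union> (fst ` Sp a x y) \<times> (snd ` Sp b x y))"
    using FI_Sp[OF a] FI_Sp[OF b] by auto
  ultimately show "finite (Sp (conv a b) x y)" by (rule finite_subset)
qed


lemma triang_add: "triang b \<Longrightarrow> triang c \<Longrightarrow> triang (\<lambda>x y. b x y + c x y)"
  by (simp add: triang_def)
lemma triang_diff: "triang b \<Longrightarrow> triang c \<Longrightarrow> triang (\<lambda>x y. b x y - c x y)"
  by (simp add: triang_def)
lemma triang_neg: "triang b \<Longrightarrow> triang (\<lambda>x y. - b x y)"
  by (simp add: triang_def)

lemma conv_add_right:
  assumes a: "a \<in> FI" and b: "triang b" and c: "triang c"
  shows "conv a (\<lambda>x y. b x y + c x y) = (\<lambda>x y. conv a b x y + conv a c x y)"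
proof (intro ext)
  fix x y
  show "conv a (\<lambda>x y. b x y + c x y) x y = conv a b x y + conv a c x y"
    unfolding conv_left[OF a triang_add[OF b c]] conv_left[OF a b] conv_left[OF a c]
    by (simp add: distrib_left sum.distrib)
qed

lemma conv_diff_right:
  assumes a: "a \<in> FI" and b: "triang b" and c: "triang c"
  shows "conv a (\<lambda>x y. b x y - c x y) = (\<lambda>x y. conv a b x y - conv a c x y)"
proof (intro ext)
  fix x y
  show "conv a (\<lambda>x y. b x y - c x y) x y = conv a b x y - conv a c x y"
    unfolding conv_left[OF a triang_diff[OF b c]] conv_left[OF a b] conv_left[OF a c]
    by (simp add: right_diff_distrib sum_subtractf)
qed

lemma conv_add_left:
  assumes a: "triang a" and b: "triang b" and c: "c \<in> FI"
  shows "conv (\<lambda>x y. a x y + b x y) c = (\<lambda>x y. conv a c x y + conv b c x y)"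
proof (intro ext)
  fix x y
  show "conv (\<lambda>x y. a x y + b x y) c x y = conv a c x y + conv b c x y"
    unfolding conv_right[OF triang_add[OF a b] c] conv_right[OF a c] conv_right[OF b c]
    by (simp add: distrib_right sum.distrib)
qed

lemma conv_neg_left:
  assumes a: "triang a" and c: "c \<in> FI"
  shows "conv (\<lambda>x y. - a x y) c = (\<lambda>x y. - conv a c x y)"
proof (intro ext)
  fix x y
  show "conv (\<lambda>x y. - a x y) c x y = - conv a c x y"
    unfolding conv_right[OF triang_neg[OF a] c] conv_right[OF a c]
    by (simp add: sum_negf)
qed

lemma conv_assoc:
  assumes a: "a \<in> FI" and b: "b \<in> FI" and c: "c \<in> FI"
  shows "conv (conv a b) c = conv a (conv b c)"
proof (intro ext)
  fix x y
  let ?A = "Rw a x y" and ?C = "Cl c x y"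
  have ta: "triang a" and tb: "triang b" and tc: "triang c"
    using a b c by (auto intro: FI_triang)
  have h1: "conv a b x w = (\<Sum>z\<in>?A. a x z * b z w)" if w: "w \<in> ?C" for w
    apply (rule conv_sum[OF ta tb Rw_fin[OF a]])
    using w by (auto simp: Rw_def Cl_def dest: triangD[OF ta] triangD[OF tb] intro: order_trans[of _ w y])
  have h2: "conv b c z y = (\<Sum>w\<in>?C. b z w * c w y)" if z: "z \<in> ?A" for z
    apply (rule conv_sum[OF tb tc Cl_fin[OF c]])
    using z by (auto simp: Rw_def Cl_def dest: triangD[OF tb] triangD[OF tc] intro: order_trans[of x z])
  have "conv (conv a b) c x y = (\<Sum>w\<in>?C. conv a b x w * c w y)"
    by (rule conv_right[OF conv_triang c])
  also have "\<dots> = (\<Sum>w\<in>?C. \<Sum>z\<in>?A. a x z * b z w * c w y)"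
    using h1 by (simp add: sum_distrib_right)
  also have "\<dots> = (\<Sum>z\<in>?A. \<Sum>w\<in>?C. a x z * (b z w * c w y))"
    by (subst sum.swap) (simp add: mult.assoc)
  also have "\<dots> = (\<Sum>z\<in>?A. a x z * conv b c z y)"
    using h2 by (simp add: sum_distrib_left)
  also have "\<dots> = conv a (conv b c) x y"
    by (rule conv_left[OF a conv_triang, symmetric])
  finally show "conv (conv a b) c x y = conv a (conv b c) x y" .
qed

definition hc :: "'a::order \<Rightarrow> 'a \<Rightarrow> nat \<Rightarrow> bool" where
  "hc x y k \<longleftrightarrow> (\<exists>C. finite C \<and> C \<subseteq> {z. x \<le> z \<and> z \<le> y} \<and> Complete_Partial_Order.chain (\<le>) C \<and> k < card C)"

lemma len_hc: assumes "0 < k" shows "(\<not> len x y \<le> enat (k - 1)) \<longleftrightarrow> hc x y k"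
proof
  assume "\<not> len x y \<le> enat (k - 1)"
  then obtain C where C: "finite C" "C \<noteq> {}" "C \<subseteq> {z. x \<le> z \<and> z \<le> y}"
     "Complete_Partial_Order.chain (\<le>) C" "\<not> enat (card C - 1) \<le> enat (k - 1)"
    unfolding len_def Sup_le_iff by blast
  then have "k < card C" using assms by simp
  then show "hc x y k" using C unfolding hc_def by blast
next
  assume "hc x y k"
  then obtain C where C: "finite C" "C \<subseteq> {z. x \<le> z \<and> z \<le> y}"
     "Complete_Partial_Order.chain (\<le>) C" "k < card C" unfolding hc_def by blast
  then have "C \<noteq> {}" by auto
  moreover have "\<not> enat (card C - 1) \<le> enat (k - 1)" using C(4) assms by simp
  ultimately show "\<not> len x y \<le> enat (k - 1)"
    unfolding len_def Sup_le_iff using C by blast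
qed

lemma hc_mono: "hc x' y' k \<Longrightarrow> x \<le> x' \<Longrightarrow> y' \<le> y \<Longrightarrow> hc x y k"
  unfolding hc_def by (smt (verit, ccfv_threshold) Collect_mono_iff order_trans subset_iff)

lemma hc_concat: assumes "hc x z m" "hc z y n" shows "hc x y (m + n)"
proof -
  obtain C1 where C1: "finite C1" "C1 \<subseteq> {w. x \<le> w \<and> w \<le> z}" "Complete_Partial_Order.chain (\<le>) C1" "m < card C1"
    using assms(1) unfolding hc_def by blast
  obtain C2 where C2: "finite C2" "C2 \<subseteq> {w. z \<le> w \<and> w \<le> y}" "Complete_Partial_Order.chain (\<le>) C2" "n < card C2"
    using assms(2) unfolding hc_def by blast
  obtain c1 where "c1 \<in> C1" using C1(4) by fastforce
  obtain c2 where "c2 \<in> C2" using C2(4) by fastforce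
  have xz: "x \<le> z" using \<open>c1 \<in> C1\<close> C1(2) by (auto intro: order_trans)
  have zy: "z \<le> y" using \<open>c2 \<in> C2\<close> C2(2) by (auto intro: order_trans)
  have "C1 \<union> C2 \<subseteq> {w. x \<le> w \<and> w \<le> y}" using C1(2) C2(2) xz zy by (auto intro: order_trans)
  moreover have "Complete_Partial_Order.chain (\<le>) (C1 \<union> C2)"
    unfolding chain_def
  proof (intro ballI)
    fix a b assume a: "a \<in> C1 \<union> C2" and b: "b \<in> C1 \<union> C2"
    show "a \<le> b \<or> b \<le> a"
    proof (cases "a \<in> C1")
      case True
      show ?thesis
      proof (cases "b \<in> C1")
        case True then show ?thesis using \<open>a \<in> C1\<close> C1(3) unfolding chain_def by blast
      next
        case False then have "b \<in> C2" using b by blast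
        then show ?thesis using \<open>a \<in> C1\<close> C1(2) C2(2) by (auto intro: order_trans)
      qed
    next
      case False then have a2: "a \<in> C2" using a by blast
      show ?thesis
      proof (cases "b \<in> C2")
        case True then show ?thesis using a2 C2(3) unfolding chain_def by blast
      next
        case False then have "b \<in> C1" using b by blast
        then show ?thesis using a2 C1(2) C2(2) by (auto intro: order_trans)
      qed
    qed
  qed
  moreover have "m + n < card (C1 \<union> C2)"
  proof -
    have "C1 \<inter> C2 \<subseteq> {z}" using C1(2) C2(2) by (auto intro: antisym)
    then have "card (C1 \<inter> C2) \<le> card {z}" by (intro card_mono) auto
    then have "card (C1 \<inter> C2) \<le> 1" by simp
    moreover have "card (C1 \<union> C2) + card (C1 \<inter> C2) = card C1 + card C2"
      using card_Un_Int[OF C1(1) C2(1)] by simp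
    ultimately show ?thesis using C1(4) C2(4) by linarith
  qed
  ultimately show ?thesis unfolding hc_def using C1(1) C2(1) by blast
qed

lemma hc_le: "hc x y k \<Longrightarrow> k' \<le> k \<Longrightarrow> hc x y k'"
  unfolding hc_def by (meson le_less_trans)

lemma hc_1: assumes "x \<le> y" shows "hc x y 1 \<longleftrightarrow> x \<noteq> y"
proof
  assume "hc x y 1"
  then obtain C where C: "finite C" "C \<subseteq> {z. x \<le> z \<and> z \<le> y}" "1 < card C" unfolding hc_def by blast
  show "x \<noteq> y"
  proof
    assume "x = y"
    then have "C \<subseteq> {x}" using C(2) by (auto intro: antisym)
    then have "card C \<le> card {x}" by (intro card_mono) auto
    then have "card C \<le> 1" by simp
    then show False using C(3) by simp
  qed
next
  assume "x \<noteq> y"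
  then have "card {x, y} = 2" by simp
  moreover have "Complete_Partial_Order.chain (\<le>) {x, y}" using assms unfolding chain_def by auto
  moreover have "{x, y} \<subseteq> {z. x \<le> z \<and> z \<le> y}" using assms by auto
  ultimately show "hc x y 1" unfolding hc_def by (intro exI[of _ "{x, y}"]) auto
qed

lemma Zk_iff: assumes "0 < k"
  shows "\<alpha> \<in> Zk k \<longleftrightarrow> \<alpha> \<in> FI \<and> (\<forall>x y. x \<le> y \<longrightarrow> \<alpha> x y \<noteq> 0 \<longrightarrow> hc x y k)"
  unfolding Zk_def using len_hc[OF assms] by blast

lemma Zk_FI: "0 < k \<Longrightarrow> \<alpha> \<in> Zk k \<Longrightarrow> \<alpha> \<in> FI" using Zk_iff by blast

lemma Zk1_iff: "\<alpha> \<in> Zk 1 \<longleftrightarrow> \<alpha> \<in> FI \<and> (\<forall>x. \<alpha> x x = 0)"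
proof -
  have "\<alpha> \<in> Zk 1 \<longleftrightarrow> \<alpha> \<in> FI \<and> (\<forall>x y. x \<le> y \<longrightarrow> \<alpha> x y \<noteq> 0 \<longrightarrow> hc x y 1)" by (rule Zk_iff) simp
  also have "\<dots> \<longleftrightarrow> \<alpha> \<in> FI \<and> (\<forall>x. \<alpha> x x = 0)" using hc_1 by blast
  finally show ?thesis .
qed

lemma Zk_mult: assumes "0 < m" "0 < n" "u \<in> Zk m" "v \<in> Zk n" shows "conv u v \<in> Zk (m + n)"
proof -
  have u: "u \<in> FI" and v: "v \<in> FI" using assms Zk_FI by blast+
  have "hc x y (m + n)" if xy: "x \<le> y" "conv u v x y \<noteq> 0" for x y
  proof -
    have "(\<Sum>z\<in>Rw u x y. u x z * v z y) \<noteq> 0" using conv_left[OF u FI_triang[OF v]] xy by simp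
    then obtain z where z: "z \<in> Rw u x y" "u x z * v z y \<noteq> 0"
      by (meson sum.not_neutral_contains_not_neutral)
    then have "x \<le> z" "z \<le> y" "u x z \<noteq> 0" "v z y \<noteq> 0" by (auto simp: Rw_def)
    then have "hc x z m" "hc z y n" using assms Zk_iff by blast+
    then show ?thesis by (rule hc_concat)
  qed
  moreover have "0 < m + n" using assms by simp
  ultimately show ?thesis using Zk_iff[of "m + n"] FI_conv[OF u v] by blast
qed

lemma Zk_multFI: assumes "0 < m" "u \<in> Zk m" "v \<in> FI" shows "conv u v \<in> Zk m"
proof -
  have u: "u \<in> FI" using assms Zk_FI by blast
  have "hc x y m" if xy: "x \<le> y" "conv u v x y \<noteq> 0" for x y
  proof -
    have "(\<Sum>z\<in>Rw u x y. u x z * v z y) \<noteq> 0" using conv_left[OF u FI_triang[OF assms(3)]] xy by simp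
    then obtain z where z: "z \<in> Rw u x y" "u x z * v z y \<noteq> 0"
      by (meson sum.not_neutral_contains_not_neutral)
    then have "x \<le> z" "z \<le> y" "u x z \<noteq> 0" by (auto simp: Rw_def)
    then have "hc x z m" using assms Zk_iff by blast
    then show ?thesis using hc_mono \<open>z \<le> y\<close> by blast
  qed
  then show ?thesis using Zk_iff[of m] assms FI_conv[OF u assms(3)] by blast
qed

lemma Zk_diff: assumes "0 < k" "a \<in> Zk k" "b \<in> Zk k" shows "(\<lambda>x y. a x y - b x y) \<in> Zk k"
  using assms FI_diff[of a b] unfolding Zk_iff[OF assms(1)] by fastforce

lemma kspan_FI: fixes v :: "nat \<Rightarrow> 'a::order \<Rightarrow> 'a \<Rightarrow> 'k::field"
  assumes "\<forall>i<n. v i \<in> FI" shows "(\<lambda>x y. \<Sum>i<n. c i * v i x y) \<in> FI"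
proof (rule FI_I)
  show "triang (\<lambda>x y. \<Sum>i<n. c i * v i x y)"
    unfolding triang_def
  proof (intro allI impI)
    fix x y :: 'a assume "\<not> x \<le> y"
    then have "\<forall>i<n. v i x y = 0" using assms FI_triang triangD by blast
    then show "(\<Sum>i<n. c i * v i x y) = 0" by simp
  qed
  fix x y :: 'a
  have "Sp (\<lambda>x y. \<Sum>i<n. c i * v i x y) x y \<subseteq> (\<Union>i<n. Sp (v i) x y)"
  proof
    fix p assume "p \<in> Sp (\<lambda>x y. \<Sum>i<n. c i * v i x y) x y"
    then obtain u w where p: "p = (u, w)" "x \<le> u" "u < w" "w \<le> y" "(\<Sum>i<n. c i * v i u w) \<noteq> 0"
      unfolding Sp_def by blast
    then obtain i where "i < n" "c i * v i u w \<noteq> 0" by (meson lessThan_iff sum.not_neutral_contains_not_neutral)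
    then show "p \<in> (\<Union>i<n. Sp (v i) x y)" using p unfolding Sp_def by auto
  qed
  moreover have "finite (\<Union>i<n. Sp (v i) x y)" using assms by (intro finite_UN_I) (auto intro: FI_Sp)
  ultimately show "finite (Sp (\<lambda>x y. \<Sum>i<n. c i * v i x y) x y)" by (rule finite_subset)
qed

lemma kspan_Zk: fixes S :: "('a::order \<Rightarrow> 'a \<Rightarrow> 'k::field) set"
  assumes "0 < k" "S \<subseteq> Zk k" shows "kspan S \<subseteq> Zk k"
proof
  fix f assume "f \<in> kspan S"
  then obtain n and c :: "nat \<Rightarrow> 'k" and v :: "nat \<Rightarrow> 'a \<Rightarrow> 'a \<Rightarrow> 'k" where v: "\<forall>i<n. v i \<in> S" and f: "f = (\<lambda>x y. \<Sum>i<n. c i * v i x y)"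
    unfolding kspan_def by blast
  have vz: "\<forall>i<n. v i \<in> Zk k" using v assms by blast
  then have "\<forall>i<n. v i \<in> FI" using Zk_FI assms by blast
  then have "f \<in> FI" using f kspan_FI by blast
  moreover have "hc x y k" if "x \<le> y" "f x y \<noteq> 0" for x y
  proof -
    have "(\<Sum>i<n. c i * v i x y) \<noteq> 0" using that f by simp
    then obtain i where "i < n" "c i * v i x y \<noteq> 0"
      by (meson lessThan_iff sum.not_neutral_contains_not_neutral)
    then have "v i \<in> Zk k" "v i x y \<noteq> 0" using vz by auto
    then show ?thesis using that(1) Zk_iff[OF assms(1)] by blast
  qed
  ultimately show "f \<in> Zk k" using Zk_iff[OF assms(1)] by blast
qed

lemma prodsp_Zk: "0 < k \<Longrightarrow> (\<And>u v. u \<in> U \<Longrightarrow> v \<in> V \<Longrightarrow> conv u v \<in> Zk k) \<Longrightarrow> prodsp U V \<subseteq> Zk k"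
  unfolding prodsp_def by (rule kspan_Zk) auto

lemma comsp_Zk: "0 < k \<Longrightarrow> (\<And>u v. u \<in> U \<Longrightarrow> v \<in> V \<Longrightarrow> comm u v \<in> Zk k) \<Longrightarrow> comsp U V \<subseteq> Zk k"
  unfolding comsp_def by (rule kspan_Zk) auto

lemma comm_Zk: assumes "0 < m" "0 < n" "u \<in> Zk m" "v \<in> Zk n" shows "comm u v \<in> Zk (m + n)"
proof -
  have "conv v u \<in> Zk (m + n)" using Zk_mult[OF assms(2,1,4,3)] by (simp add: add.commute)
  then show ?thesis unfolding comm_def using Zk_diff[OF _ Zk_mult[OF assms]] assms by simp
qed

lemma comm_FI_Zk1: assumes "u \<in> FI" "v \<in> FI" shows "comm u v \<in> Zk 1"
  unfolding Zk1_iff comm_def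
  using FI_diff[OF FI_conv[OF assms] FI_conv[OF assms(2,1)]]
    conv_diag[OF FI_triang[OF assms(1)] FI_triang[OF assms(2)]]
    conv_diag[OF FI_triang[OF assms(2)] FI_triang[OF assms(1)]]
  by (simp add: mult.commute)


lemma li_conv: assumes "left_ideal L" "r \<in> FI" "a \<in> L" shows "conv r a \<in> L"
proof -
  have "\<forall>r\<in>FI. \<forall>a\<in>L. conv r a \<in> L" using assms(1) unfolding left_ideal_def by simp
  then show ?thesis using assms(2,3) by simp
qed

lemma li_add: assumes "left_ideal L" "a \<in> L" "b \<in> L" shows "(\<lambda>x y. a x y + b x y) \<in> L"
proof -
  have "\<forall>a\<in>L. \<forall>b\<in>L. (\<lambda>x y. a x y + b x y) \<in> L" using assms(1) unfolding left_ideal_def by simp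
  then show ?thesis using assms(2,3) by simp
qed

lemma li_FI: assumes "left_ideal L" shows "L \<subseteq> FI"
  using assms unfolding left_ideal_def by simp

lemma Lx_max: fixes x :: "'a::order"
  shows "maximal_left_ideal ({\<beta> \<in> FI. \<beta> x x = 0} :: ('a \<Rightarrow> 'a \<Rightarrow> 'k::field) set)"
proof -
  let ?L = "{\<beta> \<in> FI. \<beta> x x = 0} :: ('a \<Rightarrow> 'a \<Rightarrow> 'k) set"
  have cl: "\<forall>r\<in>(FI :: ('a \<Rightarrow> 'a \<Rightarrow> 'k) set). \<forall>a\<in>?L. conv r a \<in> ?L"
  proof (intro ballI)
    fix r a :: "'a \<Rightarrow> 'a \<Rightarrow> 'k" assume r: "r \<in> FI" and a: "a \<in> ?L"
    then have aF: "a \<in> FI" and ax: "a x x = 0" by auto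
    show "conv r a \<in> ?L" using FI_conv[OF r aF] conv_diag[OF FI_triang[OF r] FI_triang[OF aF]] ax by simp
  qed
  have "?L \<subseteq> FI" by blast
  moreover have "(\<lambda>x y. 0) \<in> ?L" using FI_zero by simp
  moreover have "\<forall>a\<in>?L. \<forall>b\<in>?L. (\<lambda>x y. a x y + b x y) \<in> ?L"
  proof (intro ballI)
    fix a b assume "a \<in> ?L" "b \<in> ?L"
    then show "(\<lambda>x y. a x y + b x y) \<in> ?L" using FI_add[of a b] by simp
  qed
  moreover have "\<forall>a\<in>?L. (\<lambda>x y. - a x y) \<in> ?L"
  proof
    fix a assume "a \<in> ?L"
    then show "(\<lambda>x y. - a x y) \<in> ?L" using FI_neg[of a] by simp
  qed
  ultimately have li: "left_ideal ?L" unfolding left_ideal_def using cl by (intro conjI) simp_all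
  have "idm \<notin> ?L" by (simp add: idm_def)
  then have ne: "?L \<noteq> FI" using idm_FI by blast
  have mx: "L' = ?L \<or> L' = FI" if L': "left_ideal L'" "?L \<subseteq> L'" for L'
  proof (cases "L' \<subseteq> ?L")
    case True then show ?thesis using L' by blast
  next
    case False
    then obtain \<beta> where b: "\<beta> \<in> L'" "\<beta> \<notin> ?L" by blast
    have L'F: "L' \<subseteq> FI" using li_FI[OF L'(1)] .
    then have bF: "\<beta> \<in> FI" using b by blast
    then have bx: "\<beta> x x \<noteq> 0" using b by blast
    have "FI \<subseteq> L'"
    proof
      fix \<gamma> :: "'a \<Rightarrow> 'a \<Rightarrow> 'k" assume g: "\<gamma> \<in> FI"
      define c where "c = \<gamma> x x / \<beta> x x"
      have sF: "(\<lambda>u v. c * idm u v) \<in> FI" using FI_smul[OF idm_FI] by blast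
      have "conv (\<lambda>u v. c * idm u v) \<beta> \<in> L'" using li_conv[OF L'(1) sF b(1)] .
      then have e: "(\<lambda>u v. c * \<beta> u v) \<in> L'" using conv_scal[OF FI_triang[OF bF]] by simp
      define d where "d = (\<lambda>u v. \<gamma> u v - c * \<beta> u v)"
      have "d \<in> FI" unfolding d_def using FI_diff[OF g FI_smul[OF bF]] by blast
      moreover have "d x x = 0" unfolding d_def c_def using bx by simp
      ultimately have "d \<in> L'" using L'(2) by blast
      then have "(\<lambda>u v. d u v + c * \<beta> u v) \<in> L'" using li_add[OF L'(1) _ e] by simp
      moreover have "(\<lambda>u v. d u v + c * \<beta> u v) = \<gamma>" unfolding d_def by simp
      ultimately show "\<gamma> \<in> L'" by simp
    qed
    then show ?thesis using L'F by blast
  qed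
  show ?thesis unfolding maximal_left_ideal_def using li ne mx by blast
qed

lemma Jac_Zk1: "Jac \<subseteq> Zk 1"
proof
  fix \<alpha> :: "'a::order \<Rightarrow> 'a \<Rightarrow> 'k::field" assume a: "\<alpha> \<in> Jac"
  then have aF: "\<alpha> \<in> FI" unfolding Jac_def by blast
  have "\<alpha> x x = 0" for x
  proof -
    have "{\<beta> \<in> FI. \<beta> x x = 0} \<in> {L. maximal_left_ideal L}" using Lx_max by blast
    then have "\<alpha> \<in> {\<beta> \<in> FI. \<beta> x x = (0::'k)}" using a unfolding Jac_def by blast
    then show ?thesis by blast
  qed
  then show "\<alpha> \<in> Zk 1" using aF Zk1_iff by blast
qed

fun pok :: "('a::order \<Rightarrow> 'a \<Rightarrow> 'k::field) \<Rightarrow> 'a list \<Rightarrow> bool" where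
  "pok b [] = True"
| "pok b [a] = True"
| "pok b (a # c # r) = (a < c \<and> b a c \<noteq> 0 \<and> pok b (c # r))"

fun pw :: "('a::order \<Rightarrow> 'a \<Rightarrow> 'k::field) \<Rightarrow> 'a list \<Rightarrow> 'k" where
  "pw b [] = 1"
| "pw b [a] = 1"
| "pw b (a # c # r) = b a c * pw b (c # r)"

lemma pok_snoc: "xs \<noteq> [] \<Longrightarrow> pok b (xs @ [y]) = (pok b xs \<and> last xs < y \<and> b (last xs) y \<noteq> 0)"
  by (induction b xs rule: pok.induct) auto

lemma pw_snoc: "xs \<noteq> [] \<Longrightarrow> pw b (xs @ [y]) = pw b xs * b (last xs) y"
  by (induction b xs rule: pw.induct) (auto simp: mult.assoc)

lemma pok_bounds: "pok b (a # r) \<Longrightarrow> (\<forall>v\<in>set r. a < v) \<and> (\<forall>v\<in>set (a # r). v \<le> last (a # r))"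
proof (induction r arbitrary: a)
  case Nil thus ?case by simp
next
  case (Cons c r)
  then have ac: "a < c" and p: "pok b (c # r)" by auto
  have ih1: "\<forall>v\<in>set r. c < v" and ih2: "\<forall>v\<in>set (c # r). v \<le> last (c # r)" using Cons.IH[OF p] by auto
  have "\<forall>v\<in>set (c # r). a < v" using ac ih1 by (auto intro: less_trans)
  moreover have "a \<le> last (c # r)"
  proof -
    have "c \<le> last (c # r)" using ih2 by simp
    then show ?thesis using ac by (simp add: order.strict_implies_order order_trans)
  qed
  ultimately show ?case using ih2 by auto
qed

lemma pok_tl: "pok b (a # r) \<Longrightarrow> pok b r"
  by (cases r) auto

lemma pok_distinct: "pok b xs \<Longrightarrow> distinct xs"
proof (induction xs)
  case (Cons a r)
  then have "pok b r" using pok_tl by blast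
  then have "distinct r" using Cons.IH by blast
  moreover have "a \<notin> set r" using pok_bounds[OF Cons.prems] by blast
  ultimately show ?case by simp
qed simp

lemma Sp_mono: "x \<le> x' \<Longrightarrow> y' \<le> y \<Longrightarrow> Sp b x' y' \<subseteq> Sp b x y"
  unfolding Sp_def by (auto intro: order_trans)

lemma pok_supp: "pok b (a # r) \<Longrightarrow> set r \<subseteq> snd ` Sp b a (last (a # r))"
proof (induction r arbitrary: a)
  case Nil thus ?case by simp
next
  case (Cons c r)
  then have ac: "a < c" "b a c \<noteq> 0" and p: "pok b (c # r)" by auto
  have "set r \<subseteq> snd ` Sp b c (last (c # r))" using Cons.IH[OF p] .
  also have "\<dots> \<subseteq> snd ` Sp b a (last (c # r))" using ac by (intro image_mono Sp_mono) auto
  finally have 1: "set r \<subseteq> snd ` Sp b a (last (a # c # r))" by simp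
  have "c \<le> last (c # r)" using pok_bounds[OF p] by simp
  then have "(a, c) \<in> Sp b a (last (a # c # r))" using ac unfolding Sp_def by simp
  then have "c \<in> snd ` Sp b a (last (a # c # r))" by force
  then show ?case using 1 by simp
qed

definition paths :: "('a::order \<Rightarrow> 'a \<Rightarrow> 'k::field) \<Rightarrow> 'a \<Rightarrow> 'a \<Rightarrow> 'a list set" where
  "paths b x y = {ps. ps \<noteq> [] \<and> hd ps = x \<and> last ps = y \<and> pok b ps}"

lemma paths_cons: assumes "ps \<in> paths b x y" obtains r where "ps = x # r" "pok b (x # r)" "last (x # r) = y"
proof -
  have h: "ps \<noteq> []" "hd ps = x" "last ps = y" "pok b ps" using assms by (auto simp: paths_def)
  then obtain r where "ps = x # r" by (cases ps) auto
  then show ?thesis using that h by simp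
qed

lemma paths_le: assumes "ps \<in> paths b x y" shows "x \<le> y"
proof -
  obtain r where r: "ps = x # r" "pok b (x # r)" "last (x # r) = y" using assms by (rule paths_cons)
  then show ?thesis using pok_bounds[OF r(2)] by simp
qed

lemma paths_refl: "paths b x x = {[x]}"
proof
  show "paths b x x \<subseteq> {[x]}"
  proof
    fix ps assume "ps \<in> paths b x x"
    then obtain r where r: "ps = x # r" "pok b (x # r)" "last (x # r) = x" by (rule paths_cons)
    have "r = []"
    proof (rule ccontr)
      assume "r \<noteq> []"
      then have "last r \<in> set r" "last (x # r) = last r" by auto
      then show False using pok_bounds[OF r(2)] r(3) by auto
    qed
    then show "ps \<in> {[x]}" using r by simp
  qed
  show "{[x]} \<subseteq> paths b x x" by (simp add: paths_def)
qed

lemma paths_fin: assumes bF: "b \<in> FI" shows "finite (paths b x y)"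
proof (cases "x < y")
  case True
  define A where "A = insert x (snd ` Sp b x y)"
  have fA: "finite A" unfolding A_def using FI_Sp[OF bF] by simp
  have "paths b x y \<subseteq> {xs. set xs \<subseteq> A \<and> length xs \<le> card A}"
  proof
    fix ps assume ps: "ps \<in> paths b x y"
    then obtain r where r: "ps = x # r" "pok b (x # r)" "last (x # r) = y" by (rule paths_cons)
    have "set r \<subseteq> snd ` Sp b x y" using pok_supp[OF r(2)] r(3) by simp
    then have sA: "set ps \<subseteq> A" unfolding A_def using r(1) by auto
    have "distinct ps" using pok_distinct[OF r(2)] r(1) by simp
    then have "length ps = card (set ps)" by (simp add: distinct_card)
    also have "\<dots> \<le> card A" using sA fA by (rule card_mono[rotated])
    finally show "ps \<in> {xs. set xs \<subseteq> A \<and> length xs \<le> card A}" using sA by simp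
  qed
  moreover have "finite {xs. set xs \<subseteq> A \<and> length xs \<le> card A}" using fA by (rule finite_lists_length_le)
  ultimately show ?thesis by (rule finite_subset)
next
  case False
  show ?thesis
  proof (cases "x = y")
    case True then show ?thesis by (simp add: paths_refl)
  next
    case F2: False
    have "\<not> x \<le> y" using False F2 by (simp add: order_le_less)
    then have "paths b x y = {}" using paths_le by blast
    then show ?thesis by simp
  qed
qed

definition uinv :: "('a::order \<Rightarrow> 'a \<Rightarrow> 'k::field) \<Rightarrow> 'a \<Rightarrow> 'a \<Rightarrow> 'k" where
  "uinv b x y = (\<Sum>ps\<in>paths b x y. pw b ps)"

lemma uinv_triang: fixes b :: "'a::order \<Rightarrow> 'a \<Rightarrow> 'k::field" shows "triang (uinv b)"
  unfolding triang_def uinv_def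
proof (intro allI impI)
  fix x y :: 'a assume "\<not> x \<le> y"
  then have "paths b x y = {}" using paths_le by blast
  then show "(\<Sum>ps\<in>paths b x y. pw b ps) = 0" by simp
qed

lemma uinv_FI: fixes b :: "'a::order \<Rightarrow> 'a \<Rightarrow> 'k::field" assumes bF: "b \<in> FI" shows "uinv b \<in> FI"
proof (rule FI_I[OF uinv_triang])
  fix x y :: 'a assume "x < y"
  have "Sp (uinv b) x y \<subseteq> fst ` Sp b x y \<times> snd ` Sp b x y"
  proof
    fix p assume "p \<in> Sp (uinv b) x y"
    then obtain p1 q where p: "p = (p1, q)" "x \<le> p1" "p1 < q" "q \<le> y" "uinv b p1 q \<noteq> 0"
      unfolding Sp_def by blast
    then have "paths b p1 q \<noteq> {}" unfolding uinv_def by auto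
    then obtain ps where "ps \<in> paths b p1 q" by blast
    then obtain r where r: "ps = p1 # r" "pok b (p1 # r)" "last (p1 # r) = q" by (rule paths_cons)
    have "r \<noteq> []" using r(3) p(3) by auto
    then obtain c r' where cr: "r = c # r'" by (cases r) auto
    have pc: "p1 < c" "b p1 c \<noteq> 0" using r(2) cr by auto
    have "c \<le> q" using pok_bounds[OF r(2)] r(3) cr by simp
    then have "(p1, c) \<in> Sp b x y" using pc p unfolding Sp_def by (auto intro: order_trans)
    then have 1: "p1 \<in> fst ` Sp b x y" by force
    have "q \<in> set r" using r(3) \<open>r \<noteq> []\<close> by auto
    then have "q \<in> snd ` Sp b p1 q" using pok_supp[OF r(2)] r(3) by auto
    also have "\<dots> \<subseteq> snd ` Sp b x y" using Sp_mono[of x p1 q y b] p by auto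
    finally show "p \<in> fst ` Sp b x y \<times> snd ` Sp b x y" using 1 p(1) by simp
  qed
  moreover have "finite (fst ` Sp b x y \<times> snd ` Sp b x y)" using FI_Sp[OF bF] by simp
  ultimately show "finite (Sp (uinv b) x y)" by (rule finite_subset)
qed


lemma uinv_rec:
  fixes b :: "'a::order \<Rightarrow> 'a \<Rightarrow> 'k::field"
  assumes bF: "b \<in> FI" and bd: "\<forall>x. b x x = 0"
  shows "uinv b x y = idm x y + conv (uinv b) b x y"
proof -
  define F where "F = {z. x \<le> z \<and> z < y \<and> b z y \<noteq> 0}"
  have Fs: "F \<subseteq> fst ` Sp b x y"
  proof
    fix z assume "z \<in> F"
    then have "(z, y) \<in> Sp b x y" unfolding F_def Sp_def by auto
    then show "z \<in> fst ` Sp b x y" by force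
  qed
  have fF: "finite F" by (rule finite_subset[OF Fs]) (simp add: FI_Sp[OF bF])
  have tb: "triang b" using FI_triang[OF bF] .
  have sub: "{z. uinv b x z * b z y \<noteq> 0} \<subseteq> F"
  proof
    fix z assume "z \<in> {z. uinv b x z * b z y \<noteq> 0}"
    then have h: "uinv b x z \<noteq> 0" "b z y \<noteq> 0" by auto
    then have "x \<le> z" "z \<le> y" using triangD[OF uinv_triang] triangD[OF tb] by blast+
    moreover have "z \<noteq> y" using h(2) bd by auto
    ultimately show "z \<in> F" unfolding F_def using h by (simp add: order_le_less)
  qed
  define h where "h = (\<lambda>(z::'a, qs::'a list). qs @ [y])"
  define P2 where "P2 = h ` Sigma F (paths b x)"
  have inj: "inj_on h (Sigma F (paths b x))"
  proof (rule inj_onI)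
    fix p q assume p: "p \<in> Sigma F (paths b x)" and q: "q \<in> Sigma F (paths b x)" and e: "h p = h q"
    obtain z1 qs1 where p': "p = (z1, qs1)" by force
    obtain z2 qs2 where q': "q = (z2, qs2)" by force
    have "qs1 = qs2" using e p' q' unfolding h_def by simp
    moreover have "last qs1 = z1" "last qs2 = z2" using p q p' q' unfolding paths_def by auto
    ultimately show "p = q" using p' q' by simp
  qed
  have "conv (uinv b) b x y = (\<Sum>z\<in>F. uinv b x z * b z y)"
    by (rule conv_sum[OF uinv_triang tb fF sub])
  also have "\<dots> = (\<Sum>z\<in>F. \<Sum>qs\<in>paths b x z. pw b qs * b z y)"
    unfolding uinv_def by (simp add: sum_distrib_right)
  also have "\<dots> = (\<Sum>(z, qs)\<in>Sigma F (paths b x). pw b qs * b z y)"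
    by (rule sum.Sigma[OF fF]) (simp add: paths_fin[OF bF])
  also have "\<dots> = (\<Sum>p\<in>Sigma F (paths b x). pw b (h p))"
  proof (rule sum.cong[OF refl])
    fix p assume p: "p \<in> Sigma F (paths b x)"
    obtain z qs where p': "p = (z, qs)" by force
    have q1: "qs \<noteq> []" and q2: "last qs = z" using p p' unfolding paths_def by auto
    have "pw b (qs @ [y]) = pw b qs * b z y" using pw_snoc[OF q1, of b y] q2 by simp
    then show "(case p of (z, qs) \<Rightarrow> pw b qs * b z y) = pw b (h p)"
      unfolding h_def p' by simp
  qed
  also have "\<dots> = (\<Sum>ps\<in>P2. pw b ps)"
    unfolding P2_def using sum.reindex[OF inj, of "pw b"] by (simp add: comp_def)
  finally have c: "conv (uinv b) b x y = (\<Sum>ps\<in>P2. pw b ps)" .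
  define P1 where "P1 = (if x = y then {[x]} else {})"
  have split: "paths b x y = P1 \<union> P2"
  proof
    show "paths b x y \<subseteq> P1 \<union> P2"
    proof
      fix ps assume ps: "ps \<in> paths b x y"
      then obtain r where r: "ps = x # r" "pok b (x # r)" "last (x # r) = y" by (rule paths_cons)
      show "ps \<in> P1 \<union> P2"
      proof (cases "r = []")
        case True then show ?thesis using r unfolding P1_def by simp
      next
        case False
        define qs where "qs = butlast ps"
        have qne: "qs \<noteq> []" unfolding qs_def using r False by simp
        have "last ps = y" "ps \<noteq> []" using r by auto
        then have pq: "ps = qs @ [y]" unfolding qs_def using append_butlast_last_id[of ps] by simp
        have pk: "pok b qs" "last qs < y" "b (last qs) y \<noteq> 0" using r(2) pok_snoc[OF qne, of b y] pq r(1) by auto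
        have hq: "hd qs = x" using pq r(1) qne by (cases qs) auto
        then have qp: "qs \<in> paths b x (last qs)" unfolding paths_def using qne pk by simp
        then have "x \<le> last qs" by (rule paths_le)
        then have "last qs \<in> F" unfolding F_def using pk by simp
        then have "(last qs, qs) \<in> Sigma F (paths b x)" using qp by simp
        then have "h (last qs, qs) \<in> P2" unfolding P2_def by (rule imageI)
        then show ?thesis using pq unfolding h_def by simp
      qed
    qed
    show "P1 \<union> P2 \<subseteq> paths b x y"
    proof
      fix ps assume "ps \<in> P1 \<union> P2"
      then show "ps \<in> paths b x y"
      proof
        assume "ps \<in> P1" then show ?thesis unfolding P1_def by (auto simp: paths_refl split: if_splits)
      next
        assume "ps \<in> P2"
        then obtain z qs where zq: "z \<in> F" "qs \<in> paths b x z" "ps = qs @ [y]" unfolding P2_def h_def by auto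
        then have q: "qs \<noteq> []" "hd qs = x" "last qs = z" "pok b qs" unfolding paths_def by auto
        have "z < y" "b z y \<noteq> 0" using zq(1) unfolding F_def by auto
        then have "pok b (qs @ [y])" using iffD2[OF pok_snoc[OF q(1), of b y]] q by simp
        then show ?thesis using zq(3) q unfolding paths_def by simp
      qed
    qed
  qed
  have disj: "P1 \<inter> P2 = {}"
    unfolding P1_def P2_def h_def by (auto simp: paths_def)
  have fP2: "finite P2" unfolding P2_def using fF paths_fin[OF bF] by auto
  have s1: "(\<Sum>ps\<in>P1. pw b ps) = idm x y" unfolding P1_def idm_def by simp
  have "uinv b x y = (\<Sum>ps\<in>P1. pw b ps) + (\<Sum>ps\<in>P2. pw b ps)"
    unfolding uinv_def split by (rule sum.union_disjoint[OF _ fP2 disj]) (simp add: P1_def)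
  then show ?thesis using s1 c by simp
qed

lemma left_inv:
  fixes \<beta> :: "'a::order \<Rightarrow> 'a \<Rightarrow> 'k::field"
  assumes bF: "\<beta> \<in> FI" and bd: "\<forall>x. \<beta> x x = 0"
  shows "conv (uinv \<beta>) (\<lambda>x y. idm x y - \<beta> x y) = idm"
proof -
  have "conv (uinv \<beta>) (\<lambda>x y. idm x y - \<beta> x y) = (\<lambda>x y. conv (uinv \<beta>) idm x y - conv (uinv \<beta>) \<beta> x y)"
    by (rule conv_diff_right[OF uinv_FI[OF bF] idm_triang FI_triang[OF bF]])
  also have "\<dots> = (\<lambda>x y. uinv \<beta> x y - conv (uinv \<beta>) \<beta> x y)"
    using conv_idm_right[OF uinv_triang[of \<beta>]] by simp
  also have "\<dots> = idm" using uinv_rec[OF bF bd] by (intro ext) simp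
  finally show ?thesis .
qed


lemma Zk1_Jac: "(Zk 1 :: ('a::order \<Rightarrow> 'a \<Rightarrow> 'k::field) set) \<subseteq> Jac"
proof
  fix \<alpha> :: "'a \<Rightarrow> 'a \<Rightarrow> 'k" assume "\<alpha> \<in> Zk 1"
  then have aF: "\<alpha> \<in> FI" and ad: "\<forall>x. \<alpha> x x = 0" using Zk1_iff by blast+
  have ta: "triang \<alpha>" using FI_triang[OF aF] .
  have "\<alpha> \<in> L" if mL: "maximal_left_ideal L" for L :: "('a \<Rightarrow> 'a \<Rightarrow> 'k) set"
  proof (rule ccontr)
    assume na: "\<alpha> \<notin> L"
    have li: "left_ideal L" and neq: "L \<noteq> FI"
      and mx: "\<And>L'. left_ideal L' \<Longrightarrow> L \<subseteq> L' \<Longrightarrow> L' = L \<or> L' = FI"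
      using mL unfolding maximal_left_ideal_def by blast+
    have LF: "L \<subseteq> FI" using li_FI[OF li] .
    have L0: "(\<lambda>x y. 0) \<in> L" using li unfolding left_ideal_def by simp
    have Lneg: "\<And>a. a \<in> L \<Longrightarrow> (\<lambda>x y. - a x y) \<in> L"
    proof -
      fix a :: "'a \<Rightarrow> 'a \<Rightarrow> 'k" assume "a \<in> L"
      moreover have "\<forall>a\<in>L. (\<lambda>x y. - a x y) \<in> L" using li unfolding left_ideal_def by simp
      ultimately show "(\<lambda>x y. - a x y) \<in> L" by simp
    qed
    define L' where "L' = {\<gamma>. \<exists>l\<in>L. \<exists>r\<in>FI. \<gamma> = (\<lambda>x y. l x y + conv r \<alpha> x y)}"
    have L'I: "(\<lambda>x y. l x y + conv r \<alpha> x y) \<in> L'" if "l \<in> L" "r \<in> FI" for l r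
      unfolding L'_def using that by blast
    have L'E: "\<exists>l r. l \<in> L \<and> r \<in> FI \<and> \<gamma> = (\<lambda>x y. l x y + conv r \<alpha> x y)" if "\<gamma> \<in> L'" for \<gamma>
      using that unfolding L'_def by blast
    have "L' \<subseteq> FI"
    proof
      fix \<gamma> :: "'a \<Rightarrow> 'a \<Rightarrow> 'k" assume "\<gamma> \<in> L'"
      then obtain l r where lr: "l \<in> L" "r \<in> FI" "\<gamma> = (\<lambda>x y. l x y + conv r \<alpha> x y)" using L'E by blast
      then show "\<gamma> \<in> FI" using FI_add[OF _ FI_conv[OF lr(2) aF], of l] LF by blast
    qed
    moreover have "(\<lambda>x y. 0) \<in> L'"
      using L'I[OF L0 FI_zero] by (simp add: conv_zero_left)
    moreover have "\<forall>a\<in>L'. \<forall>b\<in>L'. (\<lambda>x y. a x y + b x y) \<in> L'"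
    proof (intro ballI)
      fix a b :: "'a \<Rightarrow> 'a \<Rightarrow> 'k" assume "a \<in> L'" "b \<in> L'"
      then obtain l1 r1 l2 r2 where h: "l1 \<in> L" "r1 \<in> FI" "a = (\<lambda>x y. l1 x y + conv r1 \<alpha> x y)"
        "l2 \<in> L" "r2 \<in> FI" "b = (\<lambda>x y. l2 x y + conv r2 \<alpha> x y)" using L'E by meson
      have e: "conv (\<lambda>x y. r1 x y + r2 x y) \<alpha> = (\<lambda>x y. conv r1 \<alpha> x y + conv r2 \<alpha> x y)"
        by (rule conv_add_left[OF FI_triang[OF h(2)] FI_triang[OF h(5)] aF])
      have "(\<lambda>x y. (l1 x y + l2 x y) + conv (\<lambda>x y. r1 x y + r2 x y) \<alpha> x y) \<in> L'"
        using L'I[OF li_add[OF li h(1) h(4)] FI_add[OF h(2) h(5)]] by simp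
      then show "(\<lambda>x y. a x y + b x y) \<in> L'" using h(3,6) e by (simp add: algebra_simps)
    qed
    moreover have "\<forall>a\<in>L'. (\<lambda>x y. - a x y) \<in> L'"
    proof
      fix a :: "'a \<Rightarrow> 'a \<Rightarrow> 'k" assume "a \<in> L'"
      then obtain l r where h: "l \<in> L" "r \<in> FI" "a = (\<lambda>x y. l x y + conv r \<alpha> x y)" using L'E by meson
      have e: "conv (\<lambda>x y. - r x y) \<alpha> = (\<lambda>x y. - conv r \<alpha> x y)"
        by (rule conv_neg_left[OF FI_triang[OF h(2)] aF])
      have "(\<lambda>x y. (- l x y) + conv (\<lambda>x y. - r x y) \<alpha> x y) \<in> L'"
        using L'I[OF Lneg[OF h(1)] FI_neg[OF h(2)]] by simp
      then show "(\<lambda>x y. - a x y) \<in> L'" using h(3) e by (simp add: algebra_simps)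
    qed
    moreover have "\<forall>s\<in>(FI :: ('a \<Rightarrow> 'a \<Rightarrow> 'k) set). \<forall>a\<in>L'. conv s a \<in> L'"
    proof (intro ballI)
      fix s a :: "'a \<Rightarrow> 'a \<Rightarrow> 'k" assume s: "s \<in> FI" and "a \<in> L'"
      then obtain l r where h: "l \<in> L" "r \<in> FI" "a = (\<lambda>x y. l x y + conv r \<alpha> x y)" using L'E by meson
      have lF: "l \<in> FI" using h(1) LF by blast
      have "conv s a = (\<lambda>x y. conv s l x y + conv s (conv r \<alpha>) x y)"
        unfolding h(3) by (rule conv_add_right[OF s FI_triang[OF lF] conv_triang])
      also have "conv s (conv r \<alpha>) = conv (conv s r) \<alpha>"
        by (rule conv_assoc[OF s h(2) aF, symmetric])
      finally have e: "conv s a = (\<lambda>x y. conv s l x y + conv (conv s r) \<alpha> x y)" .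
      show "conv s a \<in> L'" unfolding e by (rule L'I[OF li_conv[OF li s h(1)] FI_conv[OF s h(2)]])
    qed
    ultimately have li': "left_ideal L'" unfolding left_ideal_def by (intro conjI) simp_all
    have "L \<subseteq> L'"
    proof
      fix l :: "'a \<Rightarrow> 'a \<Rightarrow> 'k" assume "l \<in> L"
      then show "l \<in> L'" using L'I[OF _ FI_zero, of l] by (simp add: conv_zero_left)
    qed
    moreover have "\<alpha> \<in> L'" using L'I[OF L0 idm_FI] by (simp add: conv_idm_left[OF ta])
    ultimately have "L' = FI" using mx[OF li'] na by blast
    then have "idm \<in> L'" using idm_FI by simp
    then obtain l r where h: "l \<in> L" "r \<in> FI" "idm = (\<lambda>x y. l x y + conv r \<alpha> x y)" using L'E by meson
    define \<beta> where "\<beta> = conv r \<alpha>"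
    have bF: "\<beta> \<in> FI" unfolding \<beta>_def using FI_conv[OF h(2) aF] .
    have bd: "\<forall>x. \<beta> x x = 0" unfolding \<beta>_def using conv_diag[OF FI_triang[OF h(2)] ta] ad by simp
    have "l = (\<lambda>x y. idm x y - \<beta> x y)" unfolding \<beta>_def h(3) by simp
    then have "conv (uinv \<beta>) l = idm" using left_inv[OF bF bd] by simp
    then have iL: "idm \<in> L" using li_conv[OF li uinv_FI[OF bF] h(1)] by simp
    have "FI \<subseteq> L"
    proof
      fix g :: "'a \<Rightarrow> 'a \<Rightarrow> 'k" assume g: "g \<in> FI"
      then have "conv g idm \<in> L" using li_conv[OF li g iL] by simp
      then show "g \<in> L" using conv_idm_right[OF FI_triang[OF g]] by simp
    qed
    then show False using LF neq by blast
  qed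
  then show "\<alpha> \<in> Jac" unfolding Jac_def using aF by blast
qed

lemma Zk_1_Jac: "(Zk 1 :: ('a::order \<Rightarrow> 'a \<Rightarrow> 'k::field) set) = Jac"
  using Zk1_Jac Jac_Zk1 by blast

lemma FIder_Zk: "(FIder (Suc n) :: ('a::order \<Rightarrow> 'a \<Rightarrow> 'k::field) set) \<subseteq> Zk (2 ^ n)"
proof (induction n)
  case 0
  have "comsp FI FI \<subseteq> (Zk 1 :: ('a \<Rightarrow> 'a \<Rightarrow> 'k) set)"
  proof (rule comsp_Zk)
    fix u v :: "'a \<Rightarrow> 'a \<Rightarrow> 'k" assume "u \<in> FI" "v \<in> FI"
    then show "comm u v \<in> Zk 1" by (rule comm_FI_Zk1)
  qed simp
  then show ?case
    by (simp, intro prodsp_Zk) (auto intro: Zk_multFI)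
next
  case (Suc n)
  have "comsp (FIder (Suc n)) (FIder (Suc n)) \<subseteq> (Zk (2 ^ n + 2 ^ n) :: ('a \<Rightarrow> 'a \<Rightarrow> 'k) set)"
  proof (rule comsp_Zk)
    fix u v :: "'a \<Rightarrow> 'a \<Rightarrow> 'k" assume "u \<in> FIder (Suc n)" "v \<in> FIder (Suc n)"
    then have "u \<in> Zk (2 ^ n)" "v \<in> Zk (2 ^ n)" using Suc.IH by blast+
    then show "comm u v \<in> Zk (2 ^ n + 2 ^ n)" by (intro comm_Zk) simp_all
  qed simp
  then have "comsp (FIder (Suc n)) (FIder (Suc n)) \<subseteq> (Zk (2 ^ Suc n) :: ('a \<Rightarrow> 'a \<Rightarrow> 'k) set)"
    by (simp add: mult_2)
  then show ?case
    by (simp only: FIder.simps, intro prodsp_Zk) (auto intro: Zk_multFI)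
qed

lemma lcs_Zk: "(lcs n :: ('a::order \<Rightarrow> 'a \<Rightarrow> 'k::field) set) \<subseteq> Zk (Suc n)"
proof (induction n)
  case 0 then show ?case using Jac_Zk1 by simp
next
  case (Suc n)
  show ?case unfolding lcs.simps
  proof (rule comsp_Zk)
    fix u v :: "'a \<Rightarrow> 'a \<Rightarrow> 'k" assume "u \<in> lcs n" "v \<in> Jac"
    then have "u \<in> Zk (Suc n)" "v \<in> Zk 1" using Suc.IH Jac_Zk1 by blast+
    then have "comm u v \<in> Zk (Suc n + 1)" by (intro comm_Zk) auto
    then show "comm u v \<in> Zk (Suc (Suc n))" by simp
  qed simp
qed

lemma Jder_Zk: "(Jder n :: ('a::order \<Rightarrow> 'a \<Rightarrow> 'k::field) set) \<subseteq> Zk (2 ^ n)"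
proof (induction n)
  case 0 then show ?case using Jac_Zk1 by simp
next
  case (Suc n)
  have "comsp (Jder n) (Jder n) \<subseteq> (Zk (2 ^ n + 2 ^ n) :: ('a \<Rightarrow> 'a \<Rightarrow> 'k) set)"
  proof (rule comsp_Zk)
    fix u v :: "'a \<Rightarrow> 'a \<Rightarrow> 'k" assume "u \<in> Jder n" "v \<in> Jder n"
    then have "u \<in> Zk (2 ^ n)" "v \<in> Zk (2 ^ n)" using Suc.IH by blast+
    then show "comm u v \<in> Zk (2 ^ n + 2 ^ n)" by (intro comm_Zk) simp_all
  qed simp
  then have c: "comsp (Jder n) (Jder n) \<subseteq> (Zk (2 ^ Suc n) :: ('a \<Rightarrow> 'a \<Rightarrow> 'k) set)"
    by (simp add: mult_2)
  have JF: "Jac \<subseteq> FI" unfolding Jac_def by blast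
  show ?case unfolding Jder.simps
    by (rule prodsp_Zk) (use c JF in \<open>auto intro: Zk_multFI\<close>)
qed

theorem lemma1p2:
  shows "FIder 1 \<subseteq> (Zk 1 :: ('a::order \<Rightarrow> 'a \<Rightarrow> 'k::field) set)
    \<and> (Zk 1 :: ('a \<Rightarrow> 'a \<Rightarrow> 'k) set) = Jac
    \<and> (\<forall>m n. 0 < m \<longrightarrow> 0 < n \<longrightarrow>
          prodsp (Zk m) (Zk n) \<subseteq> (Zk (m + n) :: ('a \<Rightarrow> 'a \<Rightarrow> 'k) set))
    \<and> (\<forall>n. 0 < n \<longrightarrow> lcs (n - 1) \<subseteq> (Zk n :: ('a \<Rightarrow> 'a \<Rightarrow> 'k) set))
    \<and> (\<forall>n. 0 < n \<longrightarrow> FIder n \<subseteq> (Zk (2 ^ (n - 1)) :: ('a \<Rightarrow> 'a \<Rightarrow> 'k) set))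
    \<and> (\<forall>n. Jder n \<subseteq> (Zk (2 ^ n) :: ('a \<Rightarrow> 'a \<Rightarrow> 'k) set))"
proof (intro conjI allI impI)
  show "FIder 1 \<subseteq> (Zk 1 :: ('a \<Rightarrow> 'a \<Rightarrow> 'k) set)" using FIder_Zk[of 0] by simp
  show "(Zk 1 :: ('a \<Rightarrow> 'a \<Rightarrow> 'k) set) = Jac" by (rule Zk_1_Jac)
  fix m n :: nat assume "0 < m" "0 < n"
  then show "prodsp (Zk m) (Zk n) \<subseteq> (Zk (m + n) :: ('a \<Rightarrow> 'a \<Rightarrow> 'k) set)"
    by (intro prodsp_Zk) (auto intro: Zk_mult)
next
  fix n :: nat assume n: "0 < n"
  then show "lcs (n - 1) \<subseteq> (Zk n :: ('a \<Rightarrow> 'a \<Rightarrow> 'k) set)" using lcs_Zk[of "n - 1"] by simp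
next
  fix n :: nat assume n: "0 < n"
  then show "FIder n \<subseteq> (Zk (2 ^ (n - 1)) :: ('a \<Rightarrow> 'a \<Rightarrow> 'k) set)" using FIder_Zk[of "n - 1"] by simp
next
  fix n :: nat
  show "Jder n \<subseteq> (Zk (2 ^ n) :: ('a \<Rightarrow> 'a \<Rightarrow> 'k) set)" by (rule Jder_Zk)
qed

end
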